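(* Let $n\ge2$ and $\mathbf{q}\in(\Bbbk^\times)^n$; indices are modulo $n$. (1) Let $\alpha_0,\dots,\alpha_{n-1}\in\Bbbk^\times$ and set $p_i=\frac{\alpha_{i+1}}{\alpha_i}q_i$ for $0\le i<n$. The linear map $\phi_\alpha:B_n(\mathbf{q})\to B_n(\mathbf{p})$ with $\phi_\alpha(e_i)=e_i$, $\phi_\alpha(a_i)=a_i$, $\phi_\alpha(b_i)=\alpha_ib_i$ extends to an isomorphism. (2) Set $p_i=q_{i-1}$ for $0\le i<n$. The linear map $\psi:B_n(\mathbf{q})\to B_n(\mathbf{p})$ with $\psi(e_i)=e_{i+1}$, $\psi(a_i)=a_{i+1}$, $\psi(b_i)=b_{i+1}$ extends to an isomorphism.
   Context: $\Bbbk$ is an algebraically closed field of characteristic zero. Paths are written left to right. $B_n(\mathbf{q})=\Bbbk Q/(b_ia_i-q_ia_ib_{i+1},\ i=0,\dots,n-1)$, where $Q$ has vertices $e_0,\dots,e_{n-1}$, arrows $a_i:e_i\to e_{i+1}$ and loops $b_i$ at $e_i$, indices modulo $n$. *)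

theory Defs
  imports "HOL-Algebra.QuotRing" "HOL-Computational_Algebra.Polynomial"
begin

text \<open>Arrows of the quiver Q: Aa i is a_i : e_i -> e_(i+1), Bb i is the loop b_i at e_i.\<close>
datatype arr = Aa nat | Bb nat

fun arr_ok :: "nat \<Rightarrow> arr \<Rightarrow> bool" where
  "arr_ok n (Aa i) = (i < n)"
| "arr_ok n (Bb i) = (i < n)"

fun src :: "arr \<Rightarrow> nat" where
  "src (Aa i) = i"
| "src (Bb i) = i"

fun tgt :: "nat \<Rightarrow> arr \<Rightarrow> nat" where
  "tgt n (Aa i) = (Suc i) mod n"
| "tgt n (Bb i) = i"

text \<open>A path is (start vertex, list of arrows, written left to right).\<close>
type_synonym path = "nat \<times> arr list"

fun chain :: "nat \<Rightarrow> nat \<Rightarrow> arr list \<Rightarrow> bool" where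
  "chain n v [] = True"
| "chain n v (x # xs) = (arr_ok n x \<and> src x = v \<and> chain n (tgt n x) xs)"

definition valid_path :: "nat \<Rightarrow> path \<Rightarrow> bool" where
  "valid_path n p = (fst p < n \<and> chain n (fst p) (snd p))"

definition path_end :: "nat \<Rightarrow> path \<Rightarrow> nat" where
  "path_end n p = foldl (\<lambda>w x. tgt n x) (fst p) (snd p)"

text \<open>Concatenation of paths (left to right); None means the product is zero.\<close>
definition pmul :: "nat \<Rightarrow> path \<Rightarrow> path \<Rightarrow> path option" where
  "pmul n p r = (if path_end n p = fst r then Some (fst p, snd p @ snd r) else None)"

text \<open>The path algebra kQ: finitely supported k-valued functions on valid paths.\<close>
definition path_ring :: "nat \<Rightarrow> (path \<Rightarrow> 'k::field) ring" where
  "path_ring n = \<lparr>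
     carrier = {f. finite {p. f p \<noteq> 0} \<and> (\<forall>p. f p \<noteq> 0 \<longrightarrow> valid_path n p)},
     monoid.mult = (\<lambda>f g. \<lambda>p. \<Sum>(p1, p2) \<in> {(p1, p2). f p1 \<noteq> 0 \<and> g p2 \<noteq> 0 \<and> pmul n p1 p2 = Some p}.
                        f p1 * g p2),
     one = (\<lambda>p. if snd p = [] \<and> fst p < n then 1 else 0),
     zero = (\<lambda>p. 0),
     add = (\<lambda>f g. \<lambda>p. f p + g p) \<rparr>"

definition smul :: "'k::field \<Rightarrow> (path \<Rightarrow> 'k) \<Rightarrow> (path \<Rightarrow> 'k)" where
  "smul c f = (\<lambda>p. c * f p)"

definition pth :: "path \<Rightarrow> (path \<Rightarrow> 'k::field)" where
  "pth p = (\<lambda>x. if x = p then 1 else 0)"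

definition vtx :: "nat \<Rightarrow> nat \<Rightarrow> (path \<Rightarrow> 'k::field)" where
  "vtx n i = pth (i mod n, [])"

definition arrA :: "nat \<Rightarrow> nat \<Rightarrow> (path \<Rightarrow> 'k::field)" where
  "arrA n i = pth (i mod n, [Aa (i mod n)])"

definition loopB :: "nat \<Rightarrow> nat \<Rightarrow> (path \<Rightarrow> 'k::field)" where
  "loopB n i = pth (i mod n, [Bb (i mod n)])"

definition rel :: "nat \<Rightarrow> (nat \<Rightarrow> 'k::field) \<Rightarrow> nat \<Rightarrow> (path \<Rightarrow> 'k)" where
  "rel n q i = (\<lambda>p. pth (i, [Bb i, Aa i]) p - q i * pth (i, [Aa i, Bb (Suc i mod n)]) p)"

definition Irel :: "nat \<Rightarrow> (nat \<Rightarrow> 'k::field) \<Rightarrow> (path \<Rightarrow> 'k) set" where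
  "Irel n q = genideal (path_ring n) {rel n q i | i. i < n}"

definition Bn :: "nat \<Rightarrow> (nat \<Rightarrow> 'k::field) \<Rightarrow> (path \<Rightarrow> 'k) set ring" where
  "Bn n q = path_ring n Quot Irel n q"

definition cls :: "nat \<Rightarrow> (nat \<Rightarrow> 'k::field) \<Rightarrow> (path \<Rightarrow> 'k) \<Rightarrow> (path \<Rightarrow> 'k) set" where
  "cls n q f = Irel n q +>\<^bsub>path_ring n\<^esub> f"

text \<open>k-algebra isomorphism B_n(q) -> B_n(p): ring isomorphism that is k-linear,
  i.e. fixes the scalars c*1.\<close>
definition k_alg_iso :: "nat \<Rightarrow> (nat \<Rightarrow> 'k::field) \<Rightarrow> (nat \<Rightarrow> 'k)
    \<Rightarrow> ((path \<Rightarrow> 'k) set \<Rightarrow> (path \<Rightarrow> 'k) set) \<Rightarrow> bool" where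
  "k_alg_iso n q p h = (h \<in> ring_iso (Bn n q) (Bn n p) \<and>
     (\<forall>c. h (cls n q (smul c \<one>\<^bsub>path_ring n\<^esub>)) = cls n p (smul c \<one>\<^bsub>path_ring n\<^esub>)))"

definition alg_closed :: "'k::field itself \<Rightarrow> bool" where
  "alg_closed _ = (\<forall>f :: 'k poly. degree f > 0 \<longrightarrow> (\<exists>x. poly f x = 0))"

end

theory Submission
  imports Defs
begin


fun marr :: "(nat \<Rightarrow> nat) \<Rightarrow> arr \<Rightarrow> arr" where
  "marr s (Aa i) = Aa (s i)" | "marr s (Bb i) = Bb (s i)"

definition mpath :: "(nat \<Rightarrow> nat) \<Rightarrow> path \<Rightarrow> path" where
  "mpath s p = (s (fst p), map (marr s) (snd p))"

fun wa :: "(nat \<Rightarrow> 'k::field) \<Rightarrow> arr \<Rightarrow> 'k" where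
  "wa b (Aa i) = 1" | "wa b (Bb i) = b i"

definition wt :: "(nat \<Rightarrow> 'k::field) \<Rightarrow> arr list \<Rightarrow> 'k" where
  "wt b xs = prod_list (map (wa b) xs)"

definition Phi :: "(nat \<Rightarrow> nat) \<Rightarrow> (nat \<Rightarrow> 'k::field) \<Rightarrow> (path \<Rightarrow> 'k) \<Rightarrow> (path \<Rightarrow> 'k)" where
  "Phi s' b f = (\<lambda>p. wt b (snd (mpath s' p)) * f (mpath s' p))"

lemma foldl_tgt: "foldl (\<lambda>w x. tgt n x) v xs = (if xs = [] then v else tgt n (last xs))"
  by (induction xs arbitrary: v) auto

lemma path_end_alt: "path_end n p = (if snd p = [] then fst p else tgt n (last (snd p)))"
  by (simp add: path_end_def foldl_tgt)

lemma chain_ok: "chain n v xs \<Longrightarrow> x \<in> set xs \<Longrightarrow> arr_ok n x"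
  by (induction xs arbitrary: v) auto

lemma chain_append: "chain n v (xs @ ys) = (chain n v xs \<and> chain n (foldl (\<lambda>w x. tgt n x) v xs) ys)"
  by (induction xs arbitrary: v) auto

lemma wt_append: "wt b (xs @ ys) = wt b xs * wt b ys"
  by (simp add: wt_def)

lemma wt_nz: "chain n v xs \<Longrightarrow> (\<And>i. i < n \<Longrightarrow> b i \<noteq> 0) \<Longrightarrow> wt b xs \<noteq> 0"
proof (induction xs arbitrary: v)
  case (Cons x xs)
  then show ?case by (cases x) (auto simp: wt_def)
qed (simp add: wt_def)

locale relab =
  fixes n :: nat and sv sv' :: "nat \<Rightarrow> nat"
  assumes inv1: "\<And>i. sv' (sv i) = i" and inv2: "\<And>i. sv (sv' i) = i"
    and lt: "\<And>i. i < n \<Longrightarrow> sv i < n" and lt': "\<And>i. i < n \<Longrightarrow> sv' i < n"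
    and suc: "\<And>i. i < n \<Longrightarrow> sv (Suc i mod n) = Suc (sv i) mod n"
begin

lemma lt_iff: "(sv i < n) = (i < n)"
  using lt lt' inv1 by metis

lemma dual: "relab n sv' sv"
proof
  fix i assume i: "i < n"
  then have "sv (Suc (sv' i) mod n) = Suc i mod n" using suc[OF lt'[OF i]] inv2 by simp
  then show "sv' (Suc i mod n) = Suc (sv' i) mod n" using inv1 by metis
qed (use inv1 inv2 lt lt' in auto)

lemma marr_inv[simp]: "marr sv' (marr sv x) = x"
  by (cases x) (auto simp: inv1)

lemma mpath_inv[simp]: "mpath sv' (mpath sv r) = r"
  by (simp add: mpath_def comp_def inv1)

lemma arr_ok_m[simp]: "arr_ok n (marr sv x) = arr_ok n x"
  by (cases x) (auto simp: lt_iff)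

lemma src_m[simp]: "src (marr sv x) = sv (src x)"
  by (cases x) auto

lemma tgt_m: "arr_ok n x \<Longrightarrow> tgt n (marr sv x) = sv (tgt n x)"
  by (cases x) (auto simp: suc)

lemma chain_m: "chain n (sv v) (map (marr sv) xs) = chain n v xs"
proof (induction xs arbitrary: v)
  case (Cons x xs)
  have "(sv (src x) = sv v) = (src x = v)" using inv1 by metis
  then show ?case using Cons by (auto simp: tgt_m)
qed simp

lemma valid_m[simp]: "valid_path n (mpath sv r) = valid_path n r"
  by (simp add: valid_path_def mpath_def lt_iff chain_m)

lemma end_m: "valid_path n r \<Longrightarrow> path_end n (mpath sv r) = sv (path_end n r)"
  using chain_ok[of n "fst r" "snd r" "last (snd r)"]
  by (auto simp: path_end_alt mpath_def last_map valid_path_def tgt_m)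

lemma pmul_m: "valid_path n r1 \<Longrightarrow> pmul n (mpath sv r1) (mpath sv r2) = map_option (mpath sv) (pmul n r1 r2)"
proof -
  assume v: "valid_path n r1"
  have "(sv (path_end n r1) = sv (fst r2)) = (path_end n r1 = fst r2)" using inv1 by metis
  then show ?thesis using end_m[OF v] by (auto simp: pmul_def mpath_def)
qed

lemma wt_inv: "wt (\<lambda>i. inverse (b (sv' i))) (map (marr sv) xs) = inverse (wt b xs)"
proof (induction xs)
  case (Cons x xs) then show ?case by (cases x) (auto simp: wt_def inv1 inverse_mult_distrib)
qed (simp add: wt_def)

end

lemma carrier_pr: "f \<in> carrier (path_ring n) \<longleftrightarrow> finite {p. f p \<noteq> 0} \<and> (\<forall>p. f p \<noteq> 0 \<longrightarrow> valid_path n p)"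
  by (simp add: path_ring_def)

lemma carrier_valid: "f \<in> carrier (path_ring n) \<Longrightarrow> f p \<noteq> 0 \<Longrightarrow> valid_path n p"
  by (cases p) (simp add: path_ring_def)

locale relabw = relab +
  fixes b :: "nat \<Rightarrow> 'k::field"
  assumes bnz: "\<And>i. i < n \<Longrightarrow> b i \<noteq> 0"
begin

lemma wt_valid: "valid_path n r \<Longrightarrow> wt b (snd r) \<noteq> 0"
  using wt_nz bnz by (auto simp: valid_path_def)

lemma Phi_m[simp]: "Phi sv' b f (mpath sv r) = wt b (snd r) * f r"
  by (simp add: Phi_def)

lemma Phi_nz: "Phi sv' b f p \<noteq> 0 \<Longrightarrow> f (mpath sv' p) \<noteq> 0"
  by (auto simp: Phi_def)

lemma mpath_inv2[simp]: "mpath sv (mpath sv' r) = r"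
  using relab.mpath_inv[OF dual] .

lemma Phi_carrier: "f \<in> carrier (path_ring n) \<Longrightarrow> Phi sv' b f \<in> carrier (path_ring n)"
proof -
  assume f: "f \<in> carrier (path_ring n)"
  have "{p. Phi sv' b f p \<noteq> 0} \<subseteq> mpath sv ` {p. f p \<noteq> 0}"
  proof
    fix p assume "p \<in> {p. Phi sv' b f p \<noteq> 0}"
    then have "f (mpath sv' p) \<noteq> 0" using Phi_nz by auto
    then show "p \<in> mpath sv ` {p. f p \<noteq> 0}" by (metis (mono_tags) mem_Collect_eq mpath_inv2 rev_image_eqI)
  qed
  moreover have "valid_path n p" if "Phi sv' b f p \<noteq> 0" for p
  proof -
    have "valid_path n (mpath sv' p)" using Phi_nz[OF that] f carrier_valid by blast
    then show ?thesis using valid_m[of "mpath sv' p"] by simp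
  qed
  ultimately show ?thesis using f by (auto simp: carrier_pr intro: finite_subset)
qed

lemma Phi_inv: "f \<in> carrier (path_ring n) \<Longrightarrow> Phi sv (\<lambda>i. inverse (b (sv' i))) (Phi sv' b f) = f"
proof
  fix p assume f: "f \<in> carrier (path_ring n)"
  show "Phi sv (\<lambda>i. inverse (b (sv' i))) (Phi sv' b f) p = f p"
  proof (cases "f p = 0")
    case False
    then have "valid_path n p" using f carrier_valid by blast
    then show ?thesis using wt_valid[of p] by (simp add: Phi_def wt_inv mpath_def comp_def inv1)
  qed (simp add: Phi_def mpath_def comp_def inv1)
qed

lemma Phi_add: "Phi sv' b (\<lambda>p. f p + g p) = (\<lambda>p. Phi sv' b f p + Phi sv' b g p)"
  by (simp add: Phi_def algebra_simps)

lemma Phi_one: "Phi sv' b \<one>\<^bsub>path_ring n\<^esub> = \<one>\<^bsub>path_ring n\<^esub>"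
proof
  fix p :: path
  have "(sv' (fst p) < n) = (fst p < n)" using relab.lt_iff[OF dual] .
  then show "Phi sv' b \<one>\<^bsub>path_ring n\<^esub> p = \<one>\<^bsub>path_ring n\<^esub> p"
    by (simp add: Phi_def path_ring_def mpath_def wt_def)
qed

lemma Phi_smul: "Phi sv' b (smul c f) = smul c (Phi sv' b f)"
  by (simp add: Phi_def smul_def fun_eq_iff algebra_simps)

lemma Phi_pth: "Phi sv' b (pth r) = smul (wt b (snd r)) (pth (mpath sv r))"
proof
  fix p
  have "(mpath sv' p = r) = (p = mpath sv r)" by (metis mpath_inv mpath_inv2)
  then show "Phi sv' b (pth r) p = smul (wt b (snd r)) (pth (mpath sv r)) p"
    by (auto simp: Phi_def smul_def pth_def)
qed

lemma Phi_mult: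
  assumes f: "f \<in> carrier (path_ring n)" and g: "g \<in> carrier (path_ring n)"
  shows "Phi sv' b (f \<otimes>\<^bsub>path_ring n\<^esub> g) = Phi sv' b f \<otimes>\<^bsub>path_ring n\<^esub> Phi sv' b g"
proof
  fix p
  let ?t = "mpath sv' p"
  let ?B = "{(r1, r2). f r1 \<noteq> 0 \<and> g r2 \<noteq> 0 \<and> pmul n r1 r2 = Some ?t}"
  let ?A = "{(p1, p2). Phi sv' b f p1 \<noteq> 0 \<and> Phi sv' b g p2 \<noteq> 0 \<and> pmul n p1 p2 = Some p}"
  have vf: "f r \<noteq> 0 \<Longrightarrow> valid_path n r" for r using f carrier_valid by blast
  have vg: "g r \<noteq> 0 \<Longrightarrow> valid_path n r" for r using g carrier_valid by blast
  have LHS: "Phi sv' b (f \<otimes>\<^bsub>path_ring n\<^esub> g) p = (\<Sum>(r1, r2)\<in>?B. wt b (snd ?t) * (f r1 * g r2))"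
    by (simp add: Phi_def path_ring_def sum_distrib_left case_prod_unfold)
  have "(\<Sum>(r1, r2)\<in>?B. wt b (snd ?t) * (f r1 * g r2)) = (\<Sum>(p1, p2)\<in>?A. Phi sv' b f p1 * Phi sv' b g p2)"
  proof (rule sum.reindex_bij_witness[where i = "map_prod (mpath sv') (mpath sv')" and j = "map_prod (mpath sv) (mpath sv)"])
    fix a assume "a \<in> ?B"
    then obtain r1 r2 where a: "a = (r1, r2)" "f r1 \<noteq> 0" "g r2 \<noteq> 0" "pmul n r1 r2 = Some ?t" by auto
    have v1: "valid_path n r1" using vf a by auto
    have v2: "valid_path n r2" using vg a by auto
    show "map_prod (mpath sv') (mpath sv') (map_prod (mpath sv) (mpath sv) a) = a" using a by simp
    have "pmul n (mpath sv r1) (mpath sv r2) = Some p" using pmul_m[OF v1, of r2] a by simp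
    then show "map_prod (mpath sv) (mpath sv) a \<in> ?A"
      using a wt_valid[OF v1] wt_valid[OF v2] by simp
    have "?t = (fst r1, snd r1 @ snd r2)" using a by (simp add: pmul_def split: if_splits)
    then have "wt b (snd ?t) = wt b (snd r1) * wt b (snd r2)" by (simp add: wt_append)
    then show "(\<lambda>(p1, p2). Phi sv' b f p1 * Phi sv' b g p2) (map_prod (mpath sv) (mpath sv) a) =
          (\<lambda>(r1, r2). wt b (snd ?t) * (f r1 * g r2)) a" using a by (simp add: algebra_simps)
  next
    fix c assume "c \<in> ?A"
    then obtain p1 p2 where c: "c = (p1, p2)" "Phi sv' b f p1 \<noteq> 0" "Phi sv' b g p2 \<noteq> 0" "pmul n p1 p2 = Some p" by auto
    have n1: "f (mpath sv' p1) \<noteq> 0" and n2: "g (mpath sv' p2) \<noteq> 0" using c Phi_nz by auto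
    have v1: "valid_path n (mpath sv' p1)" using vf n1 by auto
    have "pmul n (mpath sv' p1) (mpath sv' p2) = Some ?t"
    proof -
      have "pmul n (mpath sv (mpath sv' p1)) (mpath sv (mpath sv' p2)) = map_option (mpath sv) (pmul n (mpath sv' p1) (mpath sv' p2))"
        using pmul_m[OF v1] .
      then have "map_option (mpath sv) (pmul n (mpath sv' p1) (mpath sv' p2)) = Some p" using c by simp
      then show ?thesis by (cases "pmul n (mpath sv' p1) (mpath sv' p2)") auto
    qed
    then show "map_prod (mpath sv') (mpath sv') c \<in> ?B" using c n1 n2 by simp
    show "map_prod (mpath sv) (mpath sv) (map_prod (mpath sv') (mpath sv') c) = c" using c by simp
  qed
  then show "Phi sv' b (f \<otimes>\<^bsub>path_ring n\<^esub> g) p = (Phi sv' b f \<otimes>\<^bsub>path_ring n\<^esub> Phi sv' b g) p"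
    using LHS by (simp add: path_ring_def)
qed

end




context relabw
begin

lemma dualw: "relabw n sv' sv (\<lambda>i. inverse (b (sv' i)))"
  using dual bnz relab.lt_iff[OF dual] by (simp add: relabw_def relabw_axioms_def)

lemma Phi_inv2: "g \<in> carrier (path_ring n) \<Longrightarrow> Phi sv' b (Phi sv (\<lambda>i. inverse (b (sv' i))) g) = g"
  using relabw.Phi_inv[OF dualw, of g] by (simp add: inv1)

lemma Phi_carrier2: "g \<in> carrier (path_ring n) \<Longrightarrow> Phi sv (\<lambda>i. inverse (b (sv' i))) g \<in> carrier (path_ring n)"
  using relabw.Phi_carrier[OF dualw] by simp

lemma Phi_iso: "Phi sv' b \<in> ring_iso (path_ring n) (path_ring n)"
proof (rule ring_iso_memI)
  show "bij_betw (Phi sv' b) (carrier (path_ring n)) (carrier (path_ring n))"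
    unfolding bij_betw_def
  proof
    show "inj_on (Phi sv' b) (carrier (path_ring n))"
    proof (rule inj_onI)
      fix x y assume x: "x \<in> carrier (path_ring n)" and y: "y \<in> carrier (path_ring n)"
        and e: "Phi sv' b x = Phi sv' b y"
      have "x = Phi sv (\<lambda>i. inverse (b (sv' i))) (Phi sv' b x)" using Phi_inv[OF x] by simp
      also have "\<dots> = Phi sv (\<lambda>i. inverse (b (sv' i))) (Phi sv' b y)" using e by simp
      also have "\<dots> = y" using Phi_inv[OF y] .
      finally show "x = y" .
    qed
    show "Phi sv' b ` carrier (path_ring n) = carrier (path_ring n)"
    proof
      show "Phi sv' b ` carrier (path_ring n) \<subseteq> carrier (path_ring n)" using Phi_carrier by blast
      show "carrier (path_ring n) \<subseteq> Phi sv' b ` carrier (path_ring n)"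
      proof
        fix g :: "path \<Rightarrow> 'k" assume g: "g \<in> carrier (path_ring n)"
        have "g = Phi sv' b (Phi sv (\<lambda>i. inverse (b (sv' i))) g)" using Phi_inv2[OF g] by simp
        then show "g \<in> Phi sv' b ` carrier (path_ring n)" using Phi_carrier2[OF g] by blast
      qed
    qed
  qed
next
  fix x y :: "path \<Rightarrow> 'k" assume "x \<in> carrier (path_ring n)" "y \<in> carrier (path_ring n)"
  then show "Phi sv' b (x \<otimes>\<^bsub>path_ring n\<^esub> y) = Phi sv' b x \<otimes>\<^bsub>path_ring n\<^esub> Phi sv' b y"
    by (rule Phi_mult)
next
  fix x y :: "path \<Rightarrow> 'k" assume "x \<in> carrier (path_ring n)" "y \<in> carrier (path_ring n)"
  show "Phi sv' b (x \<oplus>\<^bsub>path_ring n\<^esub> y) = Phi sv' b x \<oplus>\<^bsub>path_ring n\<^esub> Phi sv' b y"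
    unfolding path_ring_def by (simp add: Phi_def algebra_simps)
next
  show "Phi sv' b \<one>\<^bsub>path_ring n\<^esub> = \<one>\<^bsub>path_ring n\<^esub>" by (rule Phi_one)
next
  fix x :: "path \<Rightarrow> 'k" assume "x \<in> carrier (path_ring n)" then show "Phi sv' b x \<in> carrier (path_ring n)" by (rule Phi_carrier)
qed

lemma Phi_inv_hom: "Phi sv (\<lambda>i. inverse (b (sv' i))) \<in> ring_hom (path_ring n) (path_ring n)"
  using relabw.Phi_iso[OF dualw] by (simp add: ring_iso_def)

end

lemma ideal_transfer:
  fixes R (structure)
  assumes R: "ring R" and hP: "\<Phi> \<in> ring_hom R R" and hQ: "\<Psi> \<in> ring_hom R R"
    and inv1: "\<And>x. x \<in> carrier R \<Longrightarrow> \<Psi> (\<Phi> x) = x" and inv2: "\<And>x. x \<in> carrier R \<Longrightarrow> \<Phi> (\<Psi> x) = x"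
    and S: "S \<subseteq> carrier R" and T: "T \<subseteq> carrier R"
    and ST: "\<Phi> ` S \<subseteq> (Idl T)" and TS: "\<Psi> ` T \<subseteq> (Idl S)"
  shows "\<Phi> ` (Idl S) = (Idl T)"
proof -
  interpret R: ring R by fact
  have gen: "\<Phi> ` (Idl S) \<subseteq> (Idl T)" if hP: "\<Phi> \<in> ring_hom R R" and S: "S \<subseteq> carrier R"
     and T: "T \<subseteq> carrier R" and ST: "\<Phi> ` S \<subseteq> (Idl T)" for \<Phi> S T
  proof -
    interpret H: ring_hom_ring R R \<Phi> using ring_hom_ringI2[OF R R hP] .
    have "ideal {r \<in> carrier R. \<Phi> r \<in> (Idl T)} R" by (rule H.ideal_vimage[OF R.genideal_ideal[OF T]])
    moreover have "S \<subseteq> {r \<in> carrier R. \<Phi> r \<in> (Idl T)}" using S ST by auto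
    ultimately have "(Idl S) \<subseteq> {r \<in> carrier R. \<Phi> r \<in> (Idl T)}" by (rule R.genideal_minimal)
    then show ?thesis by auto
  qed
  have 1: "\<Phi> ` (Idl S) \<subseteq> (Idl T)" using gen[OF hP S T ST] .
  have 2: "\<Psi> ` (Idl T) \<subseteq> (Idl S)" using gen[OF hQ T S TS] .
  have sub: "(Idl T) \<subseteq> carrier R" using R.genideal_ideal[OF T] by (meson additive_subgroup.a_subset ideal.axioms(1))
  have "(Idl T) \<subseteq> \<Phi> ` \<Psi> ` (Idl T)"
  proof
    fix x assume x: "x \<in> (Idl T)"
    then have "x = \<Phi> (\<Psi> x)" using inv2 sub by auto
    then show "x \<in> \<Phi> ` \<Psi> ` (Idl T)" using x by blast
  qed
  with 2 have "(Idl T) \<subseteq> \<Phi> ` (Idl S)" by (meson image_mono subset_trans)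
  with 1 show ?thesis by blast
qed

lemma smul_one_carrier: "smul c \<one>\<^bsub>path_ring n\<^esub> \<in> carrier (path_ring n)"
proof -
  have "{p. smul c \<one>\<^bsub>path_ring n\<^esub> p \<noteq> 0} \<subseteq> (\<lambda>v. (v, [])) ` {..<n}"
    by (auto simp: smul_def path_ring_def split: if_splits)
  then show ?thesis
    by (auto simp: path_ring_def smul_def valid_path_def intro: finite_subset split: if_splits)
qed

lemma smul_mult:
  assumes f: "f \<in> carrier (path_ring n)"
  shows "smul c f = smul c \<one>\<^bsub>path_ring n\<^esub> \<otimes>\<^bsub>path_ring n\<^esub> f"
proof (cases "c = 0")
  case True
  then show ?thesis by (simp add: smul_def path_ring_def)
next
  case False
  show ?thesis
  proof
    fix p :: path
    let ?A = "{(p1, p2). smul c \<one>\<^bsub>path_ring n\<^esub> p1 \<noteq> 0 \<and> f p2 \<noteq> 0 \<and> pmul n p1 p2 = Some p}"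
    have "?A = (if f p \<noteq> 0 then {((fst p, []), p)} else {})"
    proof (cases "f p = 0")
      case True
      then show ?thesis using False by (auto simp: smul_def path_ring_def pmul_def path_end_def)
    next
      case fp: False
      then have "valid_path n p" using f carrier_valid by blast
      then show ?thesis using False fp
        by (auto simp: smul_def path_ring_def pmul_def path_end_def valid_path_def split: if_splits)
    qed
    then show "smul c f p = (smul c \<one>\<^bsub>path_ring n\<^esub> \<otimes>\<^bsub>path_ring n\<^esub> f) p"
      using False carrier_valid[OF f, of p] by (auto simp: path_ring_def smul_def valid_path_def)
  qed
qed

lemma pth_diff_carrier:
  "valid_path n r1 \<Longrightarrow> valid_path n r2 \<Longrightarrow> (\<lambda>p. pth r1 p - c * pth r2 p) \<in> carrier (path_ring n)"
proof -
  assume v: "valid_path n r1" "valid_path n r2"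
  have "{p. pth r1 p - c * pth r2 p \<noteq> 0} \<subseteq> {r1, r2}" by (auto simp: pth_def)
  then show ?thesis using v by (auto simp: path_ring_def pth_def intro: finite_subset split: if_splits)
qed

lemma rel_carrier: "i < n \<Longrightarrow> rel n q i \<in> carrier (path_ring n)"
  unfolding rel_def by (rule pth_diff_carrier) (auto simp: valid_path_def)




lemma quot_iso:
  fixes R (structure)
  assumes R: "ring R" and Phi: "\<Phi> \<in> ring_iso R R" and I: "ideal I R" and J: "ideal J R"
    and IJ: "\<Phi> ` I = J"
  shows "\<exists>h. h \<in> ring_iso (R Quot I) (R Quot J) \<and> (\<forall>a \<in> carrier R. h (I +> a) = J +> \<Phi> a)"
proof -
  interpret R: ring R by fact
  interpret J: ideal J R by fact
  define g where "g = (\<lambda>a. J +> \<Phi> a)"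
  have hom: "\<Phi> \<in> ring_hom R R" and bij: "bij_betw \<Phi> (carrier R) (carrier R)"
    using Phi by (auto simp: ring_iso_def)
  have "g \<in> ring_hom R (R Quot J)"
    using ring_hom_trans[OF hom J.rcos_ring_hom] unfolding g_def by (simp add: comp_def)
  then interpret G: ring_hom_ring R "R Quot J" g
    using ring_hom_ringI2[OF R J.quotient_is_ring] by simp
  have surj: "g ` carrier R = carrier (R Quot J)"
  proof
    show "g ` carrier R \<subseteq> carrier (R Quot J)"
      using hom by (auto simp: g_def FactRing_def A_RCOSETS_def' ring_hom_def)
    show "carrier (R Quot J) \<subseteq> g ` carrier R"
    proof
      fix X assume "X \<in> carrier (R Quot J)"
      then obtain b where b: "b \<in> carrier R" "X = J +> b"
        by (auto simp: FactRing_def A_RCOSETS_def')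
      then obtain a where "a \<in> carrier R" "\<Phi> a = b" using bij
        by (metis bij_betw_imp_surj_on imageE)
      then show "X \<in> g ` carrier R" using b by (auto simp: g_def)
    qed
  qed
  have ISub: "I \<subseteq> carrier R" using I by (simp add: ideal_def additive_subgroup.a_subset)
  have JSub: "J \<subseteq> carrier R" using J.a_subset .
  have ker: "a_kernel R (R Quot J) g = I"
  proof -
    have "J +> x = J \<longleftrightarrow> x \<in> J" if "x \<in> carrier R" for x
    proof
      assume "J +> x = J"
      moreover have "x \<in> J +> x" using that J.a_rcos_self by blast
      ultimately show "x \<in> J" by simp
    next
      assume "x \<in> J" then show "J +> x = J" by (rule J.a_rcos_const)
    qed
    moreover have "\<Phi> a \<in> carrier R" if "a \<in> carrier R" for a using hom that by (auto simp: ring_hom_def)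
    moreover have "(\<Phi> a \<in> J) = (a \<in> I)" if "a \<in> carrier R" for a
    proof
      assume "\<Phi> a \<in> J"
      then obtain b where "b \<in> I" "\<Phi> b = \<Phi> a" using IJ by auto
      then show "a \<in> I" using bij that ISub by (metis bij_betw_def inj_onD subsetD)
    qed (use IJ in auto)
    ultimately show ?thesis using ISub
      by (auto simp: a_kernel_def' g_def FactRing_def)
  qed
  show ?thesis
    apply (rule exI[of _ "\<lambda>X. the_elem (g ` X)"])
    using G.FactRing_iso_set[OF surj] G.the_elem_simp unfolding ker by (simp add: g_def)
qed




lemma pth_carrier: "valid_path n r \<Longrightarrow> pth r \<in> carrier (path_ring n)"
proof -
  assume v: "valid_path n r"
  have "{p. pth r p \<noteq> (0::'k::field)} \<subseteq> {r}" by (auto simp: pth_def)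
  then show ?thesis using v by (auto simp: path_ring_def pth_def intro: finite_subset split: if_splits)
qed

lemma smul_smul: "smul a (smul c f) = smul (a * c) f"
  by (simp add: smul_def fun_eq_iff)

lemma smul_1[simp]: "smul 1 f = f"
  by (simp add: smul_def)

context relabw
begin

lemma Phi_diff: "Phi sv' b (\<lambda>p. f p - c * g p) = (\<lambda>p. Phi sv' b f p - c * Phi sv' b g p)"
  by (simp add: Phi_def fun_eq_iff algebra_simps)

lemma Phi_rel: "Phi sv' b (rel n q i) = (\<lambda>x. smul (wt b [Bb i, Aa i]) (pth (mpath sv (i,[Bb i,Aa i]))) x
   - q i * smul (wt b [Aa i, Bb (Suc i mod n)]) (pth (mpath sv (i,[Aa i, Bb (Suc i mod n)]))) x)"
  unfolding rel_def Phi_diff Phi_pth by simp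

lemma main_iso:
  fixes q p :: "nat \<Rightarrow> 'k"
  assumes R: "ring (path_ring n :: (path \<Rightarrow> 'k) ring)"
    and fw: "\<And>i. i < n \<Longrightarrow> \<exists>j<n. \<exists>c. c \<noteq> 0 \<and> Phi sv' b (rel n q i) = smul c (rel n p j)"
    and bw: "\<And>j. j < n \<Longrightarrow> \<exists>i<n. \<exists>c. c \<noteq> 0 \<and> Phi sv' b (rel n q i) = smul c (rel n p j)"
  shows "\<exists>h. k_alg_iso n q p h \<and> (\<forall>f \<in> carrier (path_ring n). h (cls n q f) = cls n p (Phi sv' b f))"
proof -
  interpret R: ring "path_ring n :: (path \<Rightarrow> 'k) ring" by (rule R)
  let ?S = "{rel n q i | i. i < n}"
  let ?T = "{rel n p i | i. i < n}"
  let ?Ps = "Phi sv (\<lambda>i. inverse (b (sv' i)))"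
  have S: "?S \<subseteq> carrier (path_ring n)" using rel_carrier by blast
  have T: "?T \<subseteq> carrier (path_ring n)" using rel_carrier by blast
  have IS: "ideal (Irel n q) (path_ring n)" unfolding Irel_def by (rule R.genideal_ideal[OF S])
  have IT: "ideal (Irel n p) (path_ring n)" unfolding Irel_def by (rule R.genideal_ideal[OF T])
  have selfT: "?T \<subseteq> Irel n p" unfolding Irel_def by (rule R.genideal_self[OF T])
  have smc: "smul c f \<in> carrier (path_ring n)" if "f \<in> carrier (path_ring n)" for c and f :: "path \<Rightarrow> 'k"
    using smul_mult[OF that, of c] R.m_closed[OF smul_one_carrier that] by simp
  have smI: "smul c f \<in> I" if I: "ideal I (path_ring n)" and f: "f \<in> I" for I :: "(path \<Rightarrow> 'k) set" and f c
  proof -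
    have fc: "f \<in> carrier (path_ring n)" using I f by (meson additive_subgroup.a_subset ideal.axioms(1) subsetD)
    show ?thesis using smul_mult[OF fc, of c] ideal.I_l_closed[OF I f smul_one_carrier] by simp
  qed
  have hom: "Phi sv' b \<in> ring_hom (path_ring n) (path_ring n)" using Phi_iso by (simp add: ring_iso_def)
  have ST: "Phi sv' b ` ?S \<subseteq> Irel n p"
  proof
    fix x assume "x \<in> Phi sv' b ` ?S"
    then obtain i where i: "i < n" "x = Phi sv' b (rel n q i)" by auto
    obtain j c where "j < n" "Phi sv' b (rel n q i) = smul c (rel n p j)" using fw[OF i(1)] by auto
    then show "x \<in> Irel n p" using i smI[OF IT] selfT by auto
  qed
  have TS: "?Ps ` ?T \<subseteq> Irel n q"
  proof
    fix x assume "x \<in> ?Ps ` ?T"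
    then obtain j where j: "j < n" "x = ?Ps (rel n p j)" by auto
    obtain i c where ic: "i < n" "c \<noteq> 0" "Phi sv' b (rel n q i) = smul c (rel n p j)" using bw[OF j(1)] by auto
    have rc: "rel n q i \<in> carrier (path_ring n)" using rel_carrier ic by blast
    have "rel n p j = smul (inverse c) (Phi sv' b (rel n q i))" using ic by (simp add: smul_smul)
    also have "\<dots> = Phi sv' b (smul (inverse c) (rel n q i))" by (simp add: Phi_smul)
    finally have "x = smul (inverse c) (rel n q i)" using j Phi_inv[OF smc[OF rc]] by simp
    moreover have "rel n q i \<in> Irel n q" using ic R.genideal_self[OF S] unfolding Irel_def by blast
    ultimately show "x \<in> Irel n q" using smI[OF IS] by simp
  qed
  have eq: "Phi sv' b ` Irel n q = Irel n p"
    using ideal_transfer[OF R hom Phi_inv_hom Phi_inv Phi_inv2 S T] ST TS unfolding Irel_def by blast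
  obtain h where h: "h \<in> ring_iso (path_ring n Quot Irel n q) (path_ring n Quot Irel n p)"
    and hv: "\<forall>a \<in> carrier (path_ring n). h (Irel n q +>\<^bsub>path_ring n\<^esub> a) = Irel n p +>\<^bsub>path_ring n\<^esub> Phi sv' b a"
    using quot_iso[OF R Phi_iso IS IT eq] by blast
  have "h (cls n q (smul c \<one>\<^bsub>path_ring n\<^esub>)) = cls n p (smul c \<one>\<^bsub>path_ring n\<^esub>)" for c
  proof -
    have "Phi sv' b (smul c \<one>\<^bsub>path_ring n\<^esub>) = smul c \<one>\<^bsub>path_ring n\<^esub>"
      by (simp add: Phi_smul Phi_one)
    moreover have "smul c \<one>\<^bsub>path_ring n\<^esub> \<in> carrier (path_ring n :: (path \<Rightarrow> 'k) ring)" by (rule smul_one_carrier)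
    ultimately show ?thesis using hv unfolding cls_def by simp
  qed
  then have "k_alg_iso n q p h"
    using h unfolding k_alg_iso_def Bn_def by simp
  then show ?thesis using hv unfolding cls_def by blast
qed

end




definition shf :: "nat \<Rightarrow> nat \<Rightarrow> nat" where "shf n i = (if i < n then Suc i mod n else i)"
definition shb :: "nat \<Rightarrow> nat \<Rightarrow> nat" where "shb n i = (if i < n then (i + n - 1) mod n else i)"

lemma A1: "i < n \<Longrightarrow> (Suc i mod n + n - 1) mod n = i"
proof (cases "Suc i = n")
  case True then show ?thesis by simp
next
  case False
  assume "i < n"
  then have "Suc i < n" using False by simp
  then show ?thesis by simp
qed

lemma A2: "j < n \<Longrightarrow> Suc ((j + n - 1) mod n) mod n = j"
proof (cases j)
  case 0
  assume "j < n"
  then show ?thesis using 0 by (cases n) auto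
next
  case (Suc k)
  assume "j < n"
  then have "(j + n - 1) mod n = k" using Suc by (simp add: mod_if)
  then show ?thesis using Suc \<open>j < n\<close> by simp
qed

lemma relab_shift: "0 < n \<Longrightarrow> relab n (shf n) (shb n)"
  by unfold_locales (auto simp: shf_def shb_def A1[simplified] A2[simplified])

lemma relab_id: "relab n id id"
  by unfold_locales auto

lemma wt_one[simp]: "wt (\<lambda>_. 1) xs = (1::'k::field)"
proof (induction xs)
  case (Cons x xs) then show ?case by (cases x) (auto simp: wt_def)
qed (simp add: wt_def)

lemma trivial_case:
  assumes "\<not> ring (path_ring n :: (path \<Rightarrow> 'k::field) ring)"
  shows "Irel n (q :: nat \<Rightarrow> 'k) = UNIV" and "cls n q f = UNIV" and "Bn n q = Bn n p"
proof -
  have U: "Irel n (r :: nat \<Rightarrow> 'k) = UNIV" for r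
    unfolding Irel_def genideal_def using assms by (auto dest: ideal.axioms(2))
  then show "Irel n q = UNIV" .
  show "cls n q f = UNIV"
  proof -
    have "x \<in> UNIV +>\<^bsub>path_ring n\<^esub> f" for x
      unfolding a_r_coset_def r_coset_def
      by (rule UN_I[of "\<lambda>p. x p - f p"]) (auto simp: path_ring_def)
    then show ?thesis unfolding cls_def U by auto
  qed
  show "Bn n q = Bn n p" unfolding Bn_def U ..
qed

theorem lemma2p9:
  fixes n :: nat and q \<alpha> :: "nat \<Rightarrow> 'k::field_char_0"
  assumes "alg_closed TYPE('k)"
    and "n \<ge> 2"
    and "\<forall>i<n. q i \<noteq> 0"
    and "\<forall>i<n. \<alpha> i \<noteq> 0"
  shows "(\<exists>h. k_alg_iso n q (\<lambda>i. \<alpha> (Suc i mod n) / \<alpha> i * q i) h \<and>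
            (\<forall>i<n. h (cls n q (vtx n i)) = cls n (\<lambda>i. \<alpha> (Suc i mod n) / \<alpha> i * q i) (vtx n i) \<and>
                   h (cls n q (arrA n i)) = cls n (\<lambda>i. \<alpha> (Suc i mod n) / \<alpha> i * q i) (arrA n i) \<and>
                   h (cls n q (loopB n i)) = cls n (\<lambda>i. \<alpha> (Suc i mod n) / \<alpha> i * q i) (smul (\<alpha> i) (loopB n i))))
       \<and> (\<exists>h. k_alg_iso n q (\<lambda>i. q ((i + n - 1) mod n)) h \<and>
            (\<forall>i<n. h (cls n q (vtx n i)) = cls n (\<lambda>i. q ((i + n - 1) mod n)) (vtx n (Suc i)) \<and>
                   h (cls n q (arrA n i)) = cls n (\<lambda>i. q ((i + n - 1) mod n)) (arrA n (Suc i)) \<and>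
                   h (cls n q (loopB n i)) = cls n (\<lambda>i. q ((i + n - 1) mod n)) (loopB n (Suc i))))"
  (is "(\<exists>h. k_alg_iso n q ?p1 h \<and> ?G1 h) \<and> (\<exists>h. k_alg_iso n q ?p2 h \<and> ?G2 h)")
proof (cases "ring (path_ring n :: (path \<Rightarrow> 'k) ring)")
  case False
  note tc = trivial_case[OF False]
  have iso: "k_alg_iso n q p id" for p :: "nat \<Rightarrow> 'k"
    unfolding k_alg_iso_def
  proof
    show "id \<in> ring_iso (Bn n q) (Bn n p)" using ring_iso_set_refl[of "Bn n q"] tc(3)[of q p] by simp
    show "\<forall>c. id (cls n q (smul c \<one>\<^bsub>path_ring n\<^esub>)) = cls n p (smul c \<one>\<^bsub>path_ring n\<^esub>)"
      using tc(2) by simp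
  qed
  have g1: "?G1 id" using tc(2) by simp
  have g2: "?G2 id" using tc(2) by simp
  show ?thesis using iso g1 g2 by (intro conjI exI[of _ id])
next
  case R: True
  have n0: "0 < n" using assms(2) by simp
  have vtxc: "valid_path n (i, [])" "valid_path n (i, [Aa i])" "valid_path n (i, [Bb i])" if "i < n" for i
    using that by (auto simp: valid_path_def)
  have part1: "\<exists>h. k_alg_iso n q ?p1 h \<and> ?G1 h"
  proof -
    have rw: "relabw n id id \<alpha>"
      unfolding relabw_def relabw_axioms_def using relab_id assms(4) by blast
    interpret W: relabw n id id \<alpha> by (rule rw)
    have key: "Phi id \<alpha> (rel n q i) = smul (\<alpha> i) (rel n ?p1 i)" if "i < n" for i
      unfolding W.Phi_rel using that assms(4) by (simp add: rel_def smul_def mpath_def wt_def fun_eq_iff field_simps)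
    have fw: "\<exists>j<n. \<exists>c. c \<noteq> 0 \<and> Phi id \<alpha> (rel n q i) = smul c (rel n ?p1 j)" if "i < n" for i
      using key[OF that] assms(4) that by (intro exI[of _ i] conjI exI[of _ "\<alpha> i"]) auto
    have bw: "\<exists>i<n. \<exists>c. c \<noteq> 0 \<and> Phi id \<alpha> (rel n q i) = smul c (rel n ?p1 j)" if "j < n" for j
      using key[OF that] assms(4) that by (intro exI[of _ j] conjI exI[of _ "\<alpha> j"]) auto
    have ex: "\<exists>h. k_alg_iso n q ?p1 h \<and> (\<forall>f \<in> carrier (path_ring n). h (cls n q f) = cls n ?p1 (Phi id \<alpha> f))"
      by (rule W.main_iso[OF R fw bw])
    then obtain h where h: "k_alg_iso n q ?p1 h"
      and hv: "\<forall>f \<in> carrier (path_ring n). h (cls n q f) = cls n ?p1 (Phi id \<alpha> f)"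
      by (elim exE conjE)
    have g: "?G1 h"
    proof (intro allI impI conjI)
      fix i assume i: "i < n"
      have e: "vtx n i = pth (i, [])" "arrA n i = pth (i, [Aa i])" "loopB n i = pth (i, [Bb i])"
        using i by (simp_all add: vtx_def arrA_def loopB_def)
      have "Phi id \<alpha> (pth (i, [])) = pth (i, [])" "Phi id \<alpha> (pth (i, [Aa i])) = pth (i, [Aa i])"
        "Phi id \<alpha> (pth (i, [Bb i])) = smul (\<alpha> i) (pth (i, [Bb i]))"
        by (simp_all only: W.Phi_pth) (simp_all add: mpath_def wt_def)
      moreover note hv[rule_format, OF pth_carrier[OF vtxc(1)[OF i]]]
        hv[rule_format, OF pth_carrier[OF vtxc(2)[OF i]]] hv[rule_format, OF pth_carrier[OF vtxc(3)[OF i]]]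
      ultimately show "h (cls n q (vtx n i)) = cls n ?p1 (vtx n i)"
        "h (cls n q (arrA n i)) = cls n ?p1 (arrA n i)"
        "h (cls n q (loopB n i)) = cls n ?p1 (smul (\<alpha> i) (loopB n i))"
        unfolding e by simp_all
    qed
    show ?thesis using h g by (intro exI[of _ h] conjI)
  qed
  have part2: "\<exists>h. k_alg_iso n q ?p2 h \<and> ?G2 h"
  proof -
    have rw: "relabw n (shf n) (shb n) (\<lambda>_. 1::'k)"
      unfolding relabw_def relabw_axioms_def using relab_shift[OF n0] by simp
    interpret W: relabw n "shf n" "shb n" "\<lambda>_. 1::'k" by (rule rw)
    have key: "Phi (shb n) (\<lambda>_. 1) (rel n q i) = rel n ?p2 (Suc i mod n)" if "i < n" for i
    proof -
      have "Suc i mod n < n" using n0 by simp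
      then show ?thesis using that
        unfolding W.Phi_rel by (simp add: rel_def mpath_def shf_def A1[simplified] fun_eq_iff)
    qed
    have fw: "\<exists>j<n. \<exists>c. c \<noteq> 0 \<and> Phi (shb n) (\<lambda>_. 1) (rel n q i) = smul c (rel n ?p2 j)" if "i < n" for i
      using key[OF that] n0 by (intro exI[of _ "Suc i mod n"] conjI exI[of _ 1]) auto
    have bw: "\<exists>i<n. \<exists>c. c \<noteq> 0 \<and> Phi (shb n) (\<lambda>_. 1) (rel n q i) = smul c (rel n ?p2 j)" if "j < n" for j
    proof -
      have lt: "(j + n - 1) mod n < n" using n0 by simp
      have "Phi (shb n) (\<lambda>_. 1) (rel n q ((j + n - 1) mod n)) = smul 1 (rel n ?p2 j)"
        using key[OF lt] A2[OF that] by simp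
      then show ?thesis using lt by (intro exI[of _ "(j + n - 1) mod n"] conjI exI[of _ 1]) auto
    qed
    have ex: "\<exists>h. k_alg_iso n q ?p2 h \<and> (\<forall>f \<in> carrier (path_ring n). h (cls n q f) = cls n ?p2 (Phi (shb n) (\<lambda>_. 1) f))"
      by (rule W.main_iso[OF R fw bw])
    then obtain h where h: "k_alg_iso n q ?p2 h"
      and hv: "\<forall>f \<in> carrier (path_ring n). h (cls n q f) = cls n ?p2 (Phi (shb n) (\<lambda>_. 1) f)"
      by (elim exE conjE)
    have g: "?G2 h"
    proof (intro allI impI conjI)
      fix i assume i: "i < n"
      have e: "vtx n i = pth (i, [])" "arrA n i = pth (i, [Aa i])" "loopB n i = pth (i, [Bb i])"
        using i by (simp_all add: vtx_def arrA_def loopB_def)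
      have e2: "vtx n (Suc i) = pth (Suc i mod n, [])" "arrA n (Suc i) = pth (Suc i mod n, [Aa (Suc i mod n)])"
        "loopB n (Suc i) = pth (Suc i mod n, [Bb (Suc i mod n)])"
        by (simp_all add: vtx_def arrA_def loopB_def)
      have "Phi (shb n) (\<lambda>_. 1::'k) (pth (i, [])) = pth (Suc i mod n, [])"
        "Phi (shb n) (\<lambda>_. 1::'k) (pth (i, [Aa i])) = pth (Suc i mod n, [Aa (Suc i mod n)])"
        "Phi (shb n) (\<lambda>_. 1::'k) (pth (i, [Bb i])) = pth (Suc i mod n, [Bb (Suc i mod n)])"
        using i by (simp_all add: W.Phi_pth mpath_def shf_def)
      moreover note hv[rule_format, OF pth_carrier[OF vtxc(1)[OF i]]]
        hv[rule_format, OF pth_carrier[OF vtxc(2)[OF i]]] hv[rule_format, OF pth_carrier[OF vtxc(3)[OF i]]]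
      ultimately show "h (cls n q (vtx n i)) = cls n ?p2 (vtx n (Suc i))"
        "h (cls n q (arrA n i)) = cls n ?p2 (arrA n (Suc i))"
        "h (cls n q (loopB n i)) = cls n ?p2 (loopB n (Suc i))"
        unfolding e e2 by simp_all
    qed
    show ?thesis using h g by (intro exI[of _ h] conjI)
  qed
  show ?thesis using part1 part2 by (rule conjI)
qed


end
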